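(* Let $S=\{a_0,a_1,a_2,\ldots\}$ and $T=\{b_0,b_1,b_2,\ldots\}$ be sets of positive integers listed in strictly increasing order ($a_i<a_{i+1}$, $b_i<b_{i+1}$), such that $a_i\geq b_i$ for all $i\geq 0$ (if $S$ is finite, this is required for all indices $i$ for which $a_i$ is defined, and $T$ has at least as many elements). Then for all $n\geq 1$, $$r_S(n)\leq r_T(n).$$
   Context: A partition is a finite nonincreasing sequence of positive integers (its parts); its size is not fixed. The perimeter of a partition with largest part $\alpha$ and $\lambda$ parts is $\alpha+\lambda-1$. For a set $X$ of positive integers, $r_X(n)$ denotes the number of partitions of perimeter $n$ all of whose parts lie in $X$. *)

theory Defs
  imports Main "HOL-Library.Infinite_Set"
begin

definition is_partition :: "nat list \<Rightarrow> bool" where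
  "is_partition p \<longleftrightarrow> p \<noteq> [] \<and> sorted_wrt (\<ge>) p \<and> (\<forall>x\<in>set p. 0 < x)"

definition perimeter :: "nat list \<Rightarrow> nat" where
  "perimeter p = hd p + length p - 1"

definition r :: "nat set \<Rightarrow> nat \<Rightarrow> nat" where
  "r X n = card {p. is_partition p \<and> set p \<subseteq> X \<and> perimeter p = n}"

definition has_elem :: "nat set \<Rightarrow> nat \<Rightarrow> bool" where
  "has_elem X i \<longleftrightarrow> infinite X \<or> i < card X"

definition elem :: "nat set \<Rightarrow> nat \<Rightarrow> nat" where
  "elem X i = (if finite X then sorted_list_of_set X ! i else enumerate X i)"

end

theory Submission
  imports Defs
begin

lemma elem_in: "has_elem X i \<Longrightarrow> elem X i \<in> X"
proof (cases "finite X")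
  case True
  assume "has_elem X i"
  then have "i < length (sorted_list_of_set X)" using True unfolding has_elem_def by auto
  then have "sorted_list_of_set X ! i \<in> set (sorted_list_of_set X)" by (rule nth_mem)
  then show ?thesis using True unfolding elem_def by simp
next
  case False
  then show ?thesis unfolding elem_def by (simp add: enumerate_in_set)
qed

lemma elem_less: "has_elem X j \<Longrightarrow> i < j \<Longrightarrow> elem X i < elem X j"
proof (cases "finite X")
  case True
  assume "has_elem X j" "i < j"
  then have j: "j < length (sorted_list_of_set X)" using True unfolding has_elem_def by auto
  have "sorted_wrt (<) (sorted_list_of_set X)" by simp
  then show ?thesis using True j \<open>i<j\<close> unfolding elem_def by (simp add: sorted_wrt_nth_less)
next
  case False
  assume "i < j"
  then show ?thesis using False unfolding elem_def by (simp add: enumerate_mono)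
qed

lemma elem_surj: "x \<in> X \<Longrightarrow> \<exists>i. has_elem X i \<and> elem X i = x"
proof (cases "finite X")
  case True
  assume "x \<in> X"
  then have "x \<in> set (sorted_list_of_set X)" using True by simp
  then obtain i where "i < length (sorted_list_of_set X)" "sorted_list_of_set X ! i = x"
    by (metis in_set_conv_nth)
  then show ?thesis using True unfolding has_elem_def elem_def by auto
next
  case False
  assume "x \<in> X"
  then obtain i where "enumerate X i = x" using False enumerate_Ex by blast
  then show ?thesis using False unfolding has_elem_def elem_def by auto
qed

lemma last_le: "sorted_wrt (\<ge>) p \<Longrightarrow> p \<noteq> [] \<Longrightarrow> x \<in> set p \<Longrightarrow> last p \<le> (x::nat)"
  by (induction p) (auto simp: last_in_set)

lemma finite_parts: "finite {p. is_partition p \<and> set p \<subseteq> X \<and> perimeter p = n}"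
proof -
  have "{p. is_partition p \<and> set p \<subseteq> X \<and> perimeter p = n} \<subseteq> {xs. set xs \<subseteq> {..n} \<and> length xs \<le> n + 1}"
  proof
    fix p assume "p \<in> {p. is_partition p \<and> set p \<subseteq> X \<and> perimeter p = n}"
    then have p: "p \<noteq> []" "sorted_wrt (\<ge>) p" "hd p + length p - 1 = n"
      unfolding is_partition_def perimeter_def by auto
    have "hd p \<le> n" using p(1,3) by (cases p) auto
    moreover have "\<forall>x\<in>set p. x \<le> hd p" using p(1,2) by (cases p) auto
    ultimately show "p \<in> {xs. set xs \<subseteq> {..n} \<and> length xs \<le> n + 1}" using p(3) by auto
  qed
  moreover have "finite {xs. set xs \<subseteq> {..n} \<and> length xs \<le> n + 1}"
    by (rule finite_lists_length_le) simp
  ultimately show ?thesis by (rule finite_subset)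
qed

theorem theorem1p3:
  fixes S T :: "nat set" and n :: nat
  assumes "0 \<notin> S" and "0 \<notin> T"
    and "\<forall>i. has_elem S i \<longrightarrow> has_elem T i \<and> elem T i \<le> elem S i"
    and "n \<ge> 1"
  shows "r S n \<le> r T n"
proof -
  define idx where "idx x = (SOME i. has_elem S i \<and> elem S i = x)" for x
  define g where "g x = elem T (idx x)" for x
  have idx: "x \<in> S \<Longrightarrow> has_elem S (idx x) \<and> elem S (idx x) = x" for x
    unfolding idx_def by (rule someI_ex) (rule elem_surj)
  have gT: "x \<in> S \<Longrightarrow> g x \<in> T" for x
    using idx assms(3) elem_in unfolding g_def by blast
  have gle: "x \<in> S \<Longrightarrow> g x \<le> x" for x
    using idx assms(3) unfolding g_def by metis
  have gless: "x \<in> S \<Longrightarrow> y \<in> S \<Longrightarrow> x < y \<Longrightarrow> g x < g y" for x y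
  proof -
    assume xy: "x \<in> S" "y \<in> S" "x < y"
    have "idx x < idx y"
    proof (rule ccontr)
      assume "\<not> idx x < idx y"
      then have "idx y = idx x \<or> idx y < idx x" by auto
      then show False using idx[OF xy(1)] idx[OF xy(2)] xy(3) elem_less
        by (metis less_asym)
    qed
    then show ?thesis unfolding g_def using idx[OF xy(2)] assms(3) elem_less by blast
  qed
  have gmono: "x \<in> S \<Longrightarrow> y \<in> S \<Longrightarrow> x \<le> y \<Longrightarrow> g x \<le> g y" for x y
    using gless by (metis le_less)
  have ginj: "inj_on g S"
    by (rule inj_onI) (metis gless linorder_neqE_nat less_irrefl)
  define f where "f p = map g p @ replicate (hd p - g (hd p)) (g (last p))" for p
  let ?A = "{p. is_partition p \<and> set p \<subseteq> S \<and> perimeter p = n}"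
  let ?B = "{p. is_partition p \<and> set p \<subseteq> T \<and> perimeter p = n}"
  have img: "f p \<in> ?B" if "p \<in> ?A" for p
  proof -
    from that have p: "p \<noteq> []" "sorted_wrt (\<ge>) p" "set p \<subseteq> S" "hd p + length p - 1 = n"
      unfolding is_partition_def perimeter_def by auto
    have hdS: "hd p \<in> S" and lastS: "last p \<in> S" using p by auto
    have s1: "sorted_wrt (\<ge>) (map g p)"
      unfolding sorted_wrt_map using p(2,3)
      by (metis (mono_tags, lifting) gmono sorted_wrt_mono_rel subsetD)
    have s3: "\<forall>x\<in>set p. g (last p) \<le> g x"
      using p lastS by (auto intro!: gmono last_le)
    have s2: "sorted_wrt (\<ge>) (replicate k (c::nat))" for k c
      by (induction k) auto
    have sorted: "sorted_wrt (\<ge>) (f p)"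
      unfolding f_def sorted_wrt_append using s1 s2 s3 by auto
    have setT: "set (f p) \<subseteq> T" unfolding f_def using p gT lastS by auto
    have pos: "\<forall>x\<in>set (f p). 0 < x" using setT assms(2) by (metis gr0I subsetD)
    have ne: "f p \<noteq> []" using p(1) unfolding f_def by simp
    have hd: "hd (f p) = g (hd p)" using p(1) unfolding f_def by (cases p) auto
    have "perimeter (f p) = n"
      unfolding perimeter_def hd using p(4) gle[OF hdS] unfolding f_def by auto
    then show ?thesis using sorted setT pos ne unfolding is_partition_def by auto
  qed
  have inj: "inj_on f ?A"
  proof (rule inj_onI)
    fix p q assume pA: "p \<in> ?A" and qA: "q \<in> ?A" and e: "f p = f q"
    from pA have p: "p \<noteq> []" "set p \<subseteq> S" "hd p + length p - 1 = n"
      unfolding is_partition_def perimeter_def by auto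
    from qA have q: "q \<noteq> []" "set q \<subseteq> S" "hd q + length q - 1 = n"
      unfolding is_partition_def perimeter_def by auto
    have "hd (f p) = g (hd p)" using p(1) unfolding f_def by (cases p) auto
    moreover have "hd (f q) = g (hd q)" using q(1) unfolding f_def by (cases q) auto
    ultimately have "g (hd p) = g (hd q)" using e by simp
    then have hh: "hd p = hd q" using ginj p q by (meson hd_in_set inj_onD subsetD)
    then have ll: "length p = length q" using p(1,3) q(1,3) by (cases p; cases q) auto
    have "map g p = take (length p) (f p)" unfolding f_def by simp
    also have "\<dots> = take (length q) (f q)" using e ll by simp
    also have "\<dots> = map g q" unfolding f_def by simp
    finally have "map g p = map g q" .
    then show "p = q" using ginj p(2) q(2)
      by (metis inj_on_map_eq_map inj_on_subset sup.boundedI set_append)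
  qed
  have "card ?A \<le> card ?B"
    by (rule card_inj_on_le[OF inj]) (use img finite_parts in auto)
  then show ?thesis unfolding r_def .
qed

end
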